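(* Let $1\le k\le s\le d$. Let $\Phi=\mathbb{E}_{S\subseteq[d],|S|=s}\,\phi_S^{\otimes k}$ and \[ \tilde\Phi=\mathbb{E}_{S\subseteq[d],|S|=s}\left[\frac{1}{s^{\underline{k}}}\sum_{\vec i,\vec j\in A(S,k)}|\vec i\rangle\langle\vec j|\right], \] where $S$ is a uniformly random subset of $[d]$ of size $s$. Then $\|\Phi-\tilde\Phi\|_1=O(k/\sqrt{s})$ (with an absolute implied constant).
   Context: $\phi_S=\left(\frac{1}{\sqrt{s}}\sum_{i\in S}|i\rangle\right)\left(\frac{1}{\sqrt{s}}\sum_{i\in S}\langle i|\right)$ for $S\subseteq[d]$ with $|S|=s$, in the computational basis of $\mathbb{C}^d$. $A(S,k)=\{(i_1,\dots,i_k)\in S^k: i_j\ne i_{j'}\text{ for }j\ne j'\}$; $|\vec i\rangle=|i_1\rangle\otimes\cdots\otimes|i_k\rangle$. $n^{\underline{k}}=n(n-1)\cdots(n-k+1)$. $\|\cdot\|_1$ is the trace norm. *)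

theory Defs
  imports "Jordan_Normal_Form.Schur_Decomposition" "HOL-Computational_Algebra.Polynomial"
begin

definition singular_values :: "complex mat \<Rightarrow> real multiset" where
  "singular_values A = image_mset (\<lambda>z. sqrt (Re z)) (proots (char_poly (mat_adjoint A * A)))"

definition trace_norm :: "complex mat \<Rightarrow> real" where
  "trace_norm A = sum_mset (singular_values A)"

(* Computational basis of (C^d)^{\<otimes>k}: basis index a < d^k corresponds to the k-tuple
   (i_1,...,i_k) with i_{t+1} = a div d^t mod d. *)
definition tup :: "nat \<Rightarrow> nat \<Rightarrow> nat \<Rightarrow> nat list" where
  "tup d k a = map (\<lambda>t. a div d ^ t mod d) [0..<k]"

(* phi_S = |u_S><u_S| with u_S = s^{-1/2} sum_{i in S} |i>, as a d x d matrix *)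
definition phi :: "nat \<Rightarrow> nat set \<Rightarrow> complex mat" where
  "phi d S = mat d d (\<lambda>(i, j).
      (if i \<in> S then 1 / complex_of_real (sqrt (card S)) else 0) *
      cnj (if j \<in> S then 1 / complex_of_real (sqrt (card S)) else 0))"

definition tensor_pow :: "nat \<Rightarrow> nat \<Rightarrow> complex mat \<Rightarrow> complex mat" where
  "tensor_pow d k M = mat (d ^ k) (d ^ k) (\<lambda>(a, b).
      \<Prod>t<k. M $$ (tup d k a ! t, tup d k b ! t))"

definition distinct_tuples :: "nat set \<Rightarrow> nat \<Rightarrow> nat list set" where
  "distinct_tuples S k = {xs. length xs = k \<and> set xs \<subseteq> S \<and> distinct xs}"

(* (1/s^{\<underline>k}) sum_{i,j in A(S,k)} |i><j|, as a d^k x d^k matrix *)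
definition tilde_term :: "nat \<Rightarrow> nat \<Rightarrow> nat set \<Rightarrow> complex mat" where
  "tilde_term d k S = mat (d ^ k) (d ^ k) (\<lambda>(a, b).
      if tup d k a \<in> distinct_tuples S k \<and> tup d k b \<in> distinct_tuples S k
      then 1 / of_nat (pochhammer (card S + 1 - k) k) else 0)"

(* subsets of [d] of size s; [d] is rendered as {0..<d} *)
definition subsets_of_size :: "nat \<Rightarrow> nat \<Rightarrow> nat set set" where
  "subsets_of_size d s = {S. S \<subseteq> {0..<d} \<and> card S = s}"

definition expect_S :: "nat \<Rightarrow> nat \<Rightarrow> nat \<Rightarrow> (nat set \<Rightarrow> complex mat) \<Rightarrow> complex mat" where
  "expect_S d s k F = mat (d ^ k) (d ^ k) (\<lambda>(a, b).
      (\<Sum>S\<in>subsets_of_size d s. F S $$ (a, b)) / of_nat (card (subsets_of_size d s)))"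

definition Phi :: "nat \<Rightarrow> nat \<Rightarrow> nat \<Rightarrow> complex mat" where
  "Phi d s k = expect_S d s k (\<lambda>S. tensor_pow d k (phi d S))"

definition Phi_tilde :: "nat \<Rightarrow> nat \<Rightarrow> nat \<Rightarrow> complex mat" where
  "Phi_tilde d s k = expect_S d s k (\<lambda>S. tilde_term d k S)"

end

theory Submission
  imports Defs "HOL-Analysis.L2_Norm"
begin

lemma adj_dim[simp]: "dim_row (mat_adjoint A) = dim_col A" "dim_col (mat_adjoint A) = dim_row A"
  by (simp_all add: mat_adjoint_def)

lemma adj_index[simp]: "i < dim_col A \<Longrightarrow> j < dim_row A \<Longrightarrow> mat_adjoint A $$ (i,j) = cnj (A $$ (j,i))"
  by (simp add: mat_adjoint_def mat_of_rows_index)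

lemma adj_carrier[simp]: "A \<in> carrier_mat n m \<Longrightarrow> mat_adjoint A \<in> carrier_mat m n"
  by (rule carrier_matI) (auto dest: carrier_matD)

lemma adj_adj[simp]: "mat_adjoint (mat_adjoint (A::complex mat)) = A"
  by (rule eq_matI) auto

lemma mult_entry: "A \<in> carrier_mat n m \<Longrightarrow> B \<in> carrier_mat m p \<Longrightarrow> i < n \<Longrightarrow> j < p \<Longrightarrow>
   (A * B) $$ (i,j) = (\<Sum>k<m. A $$ (i,k) * B $$ (k,j))"
  by (auto simp: scalar_prod_def atLeast0LessThan)

lemma adj_mult: "(A::complex mat) \<in> carrier_mat n m \<Longrightarrow> B \<in> carrier_mat m p \<Longrightarrow>
   mat_adjoint (A * B) = mat_adjoint B * mat_adjoint A"
proof (rule eq_matI)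
  fix i j assume ij: "i < dim_row (mat_adjoint B * mat_adjoint A)" "j < dim_col (mat_adjoint B * mat_adjoint A)"
  assume AB: "A \<in> carrier_mat n m" "B \<in> carrier_mat m p"
  hence i: "i < p" and j: "j < n" using ij by auto
  have "mat_adjoint (A * B) $$ (i,j) = cnj ((A * B) $$ (j,i))" using AB i j by auto
  also have "\<dots> = cnj (\<Sum>k<m. A $$ (j,k) * B $$ (k,i))" using AB i j by (subst mult_entry) auto
  also have "\<dots> = (\<Sum>k<m. mat_adjoint B $$ (i,k) * mat_adjoint A $$ (k,j))"
    using AB i j by (auto simp: mult.commute intro!: sum.cong)
  also have "\<dots> = (mat_adjoint B * mat_adjoint A) $$ (i,j)" using AB i j by (subst mult_entry[of _ p m _ n]) auto
  finally show "mat_adjoint (A * B) $$ (i,j) = (mat_adjoint B * mat_adjoint A) $$ (i,j)" .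
qed (auto)

lemma adj_one[simp]: "mat_adjoint (1\<^sub>m n :: complex mat) = 1\<^sub>m n"
  by (rule eq_matI) auto

definition dmat :: "nat \<Rightarrow> (nat \<Rightarrow> real) \<Rightarrow> complex mat" where
  "dmat n l = mat n n (\<lambda>(i,j). if i = j then complex_of_real (l i) else 0)"

lemma dmat_carrier[simp]: "dmat n l \<in> carrier_mat n n" by (simp add: dmat_def)

lemma XDY_entry: assumes "X \<in> carrier_mat n n" "Y \<in> carrier_mat n n" "i < n" "j < n"
  shows "(X * dmat n l * mat_adjoint Y) $$ (i,j) = (\<Sum>k<n. X $$ (i,k) * l k * cnj (Y $$ (j,k)))"
proof -
  have XD: "X * dmat n l \<in> carrier_mat n n" using assms by auto
  have e: "(X * dmat n l) $$ (i,k) = X $$ (i,k) * l k" if "k < n" for k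
  proof -
    have "(X * dmat n l) $$ (i,k) = (\<Sum>t<n. X $$ (i,t) * dmat n l $$ (t,k))"
      using assms that by (intro mult_entry) auto
    also have "\<dots> = (\<Sum>t<n. if t = k then X $$ (i,t) * l k else 0)"
      using that by (intro sum.cong) (auto simp: dmat_def)
    also have "\<dots> = X $$ (i,k) * l k" using that by simp
    finally show ?thesis .
  qed
  have "(X * dmat n l * mat_adjoint Y) $$ (i,j) = (\<Sum>k<n. (X * dmat n l) $$ (i,k) * mat_adjoint Y $$ (k,j))"
    using assms XD by (intro mult_entry) auto
  also have "\<dots> = (\<Sum>k<n. X $$ (i,k) * l k * cnj (Y $$ (j,k)))"
    using assms by (intro sum.cong) (auto simp: e)
  finally show ?thesis .
qed

lemma XY_entry: assumes "X \<in> carrier_mat n m" "Y \<in> carrier_mat p m" "i < n" "j < p"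
  shows "(X * mat_adjoint Y) $$ (i,j) = (\<Sum>k<m. X $$ (i,k) * cnj (Y $$ (j,k)))"
  using assms by (subst mult_entry[of _ n m _ p]) auto

lemma cnorm_sq: "(w::complex vec) \<bullet>c w = complex_of_real (\<Sum>k<dim_vec w. (cmod (w $ k))\<^sup>2)"
proof -
  have "w $ k * cnj (w $ k) = complex_of_real ((cmod (w $ k))\<^sup>2)" for k
    by (rule complex_norm_square[symmetric])
  thus ?thesis by (simp add: scalar_prod_def atLeast0LessThan of_real_sum del: of_real_power)
qed

lemma carrier_mult_sq[simp]: "A \<in> carrier_mat n n \<Longrightarrow> B \<in> carrier_mat n n \<Longrightarrow> A * B \<in> carrier_mat n n"
  by auto

definition unitary_n :: "nat \<Rightarrow> complex mat \<Rightarrow> bool" where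
  "unitary_n n U \<longleftrightarrow> U \<in> carrier_mat n n \<and> U * mat_adjoint U = 1\<^sub>m n \<and> mat_adjoint U * U = 1\<^sub>m n"

lemma unitary_nI: "U \<in> carrier_mat n n \<Longrightarrow> mat_adjoint U * U = 1\<^sub>m n \<Longrightarrow> unitary_n n U"
  unfolding unitary_n_def using mat_mult_left_right_inverse[of "mat_adjoint U" n U] by auto

lemma unitary_mult: assumes "unitary_n n U" "unitary_n n V" shows "unitary_n n (U * V)"
proof -
  have c: "U \<in> carrier_mat n n" "V \<in> carrier_mat n n" using assms unfolding unitary_n_def by auto
  have UU: "mat_adjoint U * U = 1\<^sub>m n" "mat_adjoint V * V = 1\<^sub>m n" using assms unfolding unitary_n_def by auto
  have "mat_adjoint U * (U * V) = V" using assoc_mult_mat[of "mat_adjoint U" n n U n V n] UU c by simp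
  hence "mat_adjoint (U * V) * (U * V) = 1\<^sub>m n" using c UU
    by (simp add: adj_mult[OF c] assoc_mult_mat[of "mat_adjoint V" n n "mat_adjoint U" n "U*V" n])
  thus ?thesis using c by (intro unitary_nI) auto
qed

lemma sum_lessThan_Suc_shift': "(\<Sum>k<Suc m. f k) = f 0 + (\<Sum>k<m. f (Suc k))"
  by (rule sum.lessThan_Suc_shift)

lemma unitary_extend: assumes v: "v \<in> carrier_vec n" "v \<noteq> 0\<^sub>v n"
  shows "\<exists>W c. unitary_n n W \<and> col W 0 = c \<cdot>\<^sub>v v"
proof -
  interpret cof_vec_space n "TYPE(complex)" .
  define b where "b = basis_completion v"
  from basis_completion[OF v, folded b_def]
  have b: "set b \<subseteq> carrier_vec n" "distinct b" "\<not> lin_dep (set b)" "length b = n" "hd b = v" by auto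
  have n0: "n \<noteq> 0" using v by auto
  then obtain vs where bv: "b = v # vs" using b by (cases b) auto
  define ws where "ws = gram_schmidt n b"
  from gram_schmidt_result[OF b(1-3) ws_def]
  have ws: "corthogonal ws" "set ws \<subseteq> carrier_vec n" "length ws = n" using b by auto
  have hdws: "hd ws = v" unfolding ws_def bv using v by simp
  define nsq where "nsq j = (\<Sum>k<n. (cmod (ws ! j $ k))\<^sup>2)" for j
  have wsc: "ws ! j \<in> carrier_vec n" if "j < n" for j using ws that by auto
  have nsq: "complex_of_real (nsq j) = ws ! j \<bullet>c ws ! j" if "j < n" for j
    using cnorm_sq[of "ws ! j"] wsc[OF that] unfolding nsq_def by auto
  have nsq_pos: "nsq j > 0" if "j < n" for j
  proof -
    have "ws ! j \<bullet>c ws ! j \<noteq> 0" using corthogonalD[OF ws(1)] that ws(3) by auto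
    hence "nsq j \<noteq> 0" using nsq[OF that] by auto
    moreover have "nsq j \<ge> 0" unfolding nsq_def by (intro sum_nonneg) auto
    ultimately show ?thesis by auto
  qed
  define cc where "cc j = complex_of_real (1 / sqrt (nsq j))" for j
  define W where "W = mat n n (\<lambda>(k,j). cc j * ws ! j $ k)"
  have Wc: "W \<in> carrier_mat n n" unfolding W_def by auto
  have "mat_adjoint W * W = 1\<^sub>m n"
  proof (rule eq_matI)
    fix i j assume "i < dim_row (1\<^sub>m n :: complex mat)" "j < dim_col (1\<^sub>m n :: complex mat)"
    hence i: "i < n" and j: "j < n" by auto
    have "(mat_adjoint W * W) $$ (i,j) = (\<Sum>k<n. mat_adjoint W $$ (i,k) * W $$ (k,j))"
      using Wc i j by (intro mult_entry) auto
    also have "\<dots> = (\<Sum>k<n. cc i * cc j * (ws ! j $ k * cnj (ws ! i $ k)))"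
      using Wc i j by (intro sum.cong) (auto simp: W_def cc_def)
    also have "\<dots> = cc i * cc j * (ws ! j \<bullet>c ws ! i)"
      using wsc[OF i] by (simp add: scalar_prod_def atLeast0LessThan sum_distrib_left)
    also have "\<dots> = 1\<^sub>m n $$ (i,j)"
    proof (cases "i = j")
      case True
      have "cc i * cc i * (ws ! i \<bullet>c ws ! i) = complex_of_real (1 / sqrt (nsq i) * (1 / sqrt (nsq i)) * nsq i)"
        unfolding nsq[OF i, symmetric] cc_def by (simp only: of_real_mult)
      also have "1 / sqrt (nsq i) * (1 / sqrt (nsq i)) * nsq i = 1"
        using nsq_pos[OF i] by (simp add: field_simps)
      finally show ?thesis using True i by simp
    next
      case False
      thus ?thesis using corthogonalD[OF ws(1)] i j ws(3) by auto
    qed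
    finally show "(mat_adjoint W * W) $$ (i,j) = 1\<^sub>m n $$ (i,j)" .
  qed (use Wc in auto)
  hence "unitary_n n W" using Wc by (intro unitary_nI)
  moreover have "col W 0 = cc 0 \<cdot>\<^sub>v v"
  proof -
    have "ws ! 0 = v" using hdws ws(3) n0 by (cases ws) auto
    thus ?thesis using v n0 by (intro eq_vecI) (auto simp: W_def)
  qed
  ultimately show ?thesis by blast
qed

lemma spectral:
  assumes "A \<in> carrier_mat n n" "mat_adjoint A = A"
  shows "\<exists>U l. unitary_n n U \<and> A = U * dmat n l * mat_adjoint U"
  using assms
proof (induction n arbitrary: A)
  case 0
  have "unitary_n 0 (1\<^sub>m 0)" by (intro unitary_nI) auto
  moreover have "A = 1\<^sub>m 0 * dmat 0 (\<lambda>_. 0) * mat_adjoint (1\<^sub>m 0)"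
    using 0 by (intro eq_matI) auto
  ultimately show ?case by blast
next
  case (Suc m A)
  let ?n = "Suc m"
  have A: "A \<in> carrier_mat ?n ?n" and AH: "mat_adjoint A = A" using Suc by auto
  obtain as where cp: "char_poly A = (\<Prod>a\<leftarrow>as. [:- a, 1:])" and las: "length as = ?n"
    using char_poly_factorized[OF A] by auto
  then obtain e rest where as: "as = e # rest" by (cases as) auto
  have "poly (char_poly A) e = 0" unfolding cp as by simp
  hence "eigenvalue A e" using eigenvalue_root_char_poly[OF A] by simp
  define v where "v = find_eigenvector A e"
  have ev: "eigenvector A v e" unfolding v_def by (rule find_eigenvector[OF A]) fact
  hence v: "v \<in> carrier_vec ?n" "v \<noteq> 0\<^sub>v ?n" "A *\<^sub>v v = e \<cdot>\<^sub>v v"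
    unfolding eigenvector_def using A by auto
  obtain W c where W: "unitary_n ?n W" and W0: "col W 0 = c \<cdot>\<^sub>v v"
    using unitary_extend[OF v(1,2)] by blast
  have Wc: "W \<in> carrier_mat ?n ?n" and WW: "mat_adjoint W * W = 1\<^sub>m ?n" "W * mat_adjoint W = 1\<^sub>m ?n"
    using W unfolding unitary_n_def by auto
  define B where "B = mat_adjoint W * A * W"
  have Bc: "B \<in> carrier_mat ?n ?n" unfolding B_def using Wc A by auto
  have AW0: "(A * W) $$ (k, 0) = e * W $$ (k, 0)" if "k < ?n" for k
  proof -
    have "(A * W) $$ (k, 0) = (A *\<^sub>v col W 0) $ k" using that A Wc by simp
    also have "\<dots> = (c \<cdot>\<^sub>v (A *\<^sub>v v)) $ k" unfolding W0 using A v(1) by (simp add: mult_mat_vec)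
    also have "\<dots> = e * (c \<cdot>\<^sub>v v) $ k" unfolding v(3) using that v(1) by simp
    also have "\<dots> = e * W $$ (k, 0)" using that Wc W0[symmetric] by (simp add: col_def)
    finally show ?thesis .
  qed
  have B0: "B $$ (i, 0) = (if i = 0 then e else 0)" if "i < ?n" for i
  proof -
    have "B = mat_adjoint W * (A * W)" unfolding B_def using Wc A by (simp add: assoc_mult_mat[of _ ?n ?n _ ?n _ ?n])
    hence "B $$ (i, 0) = (mat_adjoint W * (A * W)) $$ (i,0)" by simp
    also have "\<dots> = (\<Sum>k<?n. mat_adjoint W $$ (i,k) * (A * W) $$ (k, 0))"
      by (rule mult_entry[of _ ?n ?n _ ?n]) (use that Wc A in auto)
    also have "\<dots> = (\<Sum>k<?n. e * (mat_adjoint W $$ (i,k) * W $$ (k, 0)))"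
      by (intro sum.cong) (auto simp: AW0)
    also have "\<dots> = e * (\<Sum>k<?n. mat_adjoint W $$ (i,k) * W $$ (k, 0))"
      by (rule sum_distrib_left[symmetric])
    also have "(\<Sum>k<?n. mat_adjoint W $$ (i,k) * W $$ (k, 0)) = (mat_adjoint W * W) $$ (i,0)"
      by (rule mult_entry[symmetric, of _ ?n ?n _ ?n]) (use that Wc in auto)
    finally show ?thesis using WW that by simp
  qed
  have BH: "mat_adjoint B = B"
  proof -
    have "mat_adjoint B = mat_adjoint W * mat_adjoint (mat_adjoint W * A)"
      unfolding B_def by (rule adj_mult[of _ ?n ?n _ ?n]) (use Wc A in auto)
    also have "mat_adjoint (mat_adjoint W * A) = mat_adjoint A * W"
      by (subst adj_mult[of _ ?n ?n _ ?n]) (use Wc A in auto)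
    finally show ?thesis using AH Wc A unfolding B_def
      by (simp add: assoc_mult_mat[of _ ?n ?n _ ?n _ ?n])
  qed
  have Bsym: "B $$ (j, i) = cnj (B $$ (i, j))" if "i < ?n" "j < ?n" for i j
    using arg_cong[OF BH, of "\<lambda>M. M $$ (j,i)"] that Bc by auto
  have B0': "B $$ (0, j) = (if j = 0 then e else 0)" if "j < ?n" for j
  proof -
    have e_real: "cnj e = e" using Bsym[of 0 0] B0[of 0] by auto
    show ?thesis using Bsym[of j 0] B0[OF that] that e_real by auto
  qed
  have ecnj: "cnj e = e" using Bsym[of 0 0] B0[of 0] by auto
  hence "Im e = 0" by (simp add: complex_eq_iff)
  hence ereal: "e = complex_of_real (Re e)" by (simp add: complex_eq_iff)
  define B3 where "B3 = mat m m (\<lambda>(i,j). B $$ (Suc i, Suc j))"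
  have B3c: "B3 \<in> carrier_mat m m" unfolding B3_def by auto
  have B3H: "mat_adjoint B3 = B3"
  proof (rule eq_matI)
    fix i j assume "i < dim_row B3" "j < dim_col B3"
    hence i: "i < m" and j: "j < m" using B3c by auto
    have "mat_adjoint B3 $$ (i,j) = cnj (B $$ (Suc j, Suc i))" using i j by (simp add: B3_def)
    also have "\<dots> = B $$ (Suc i, Suc j)" using Bsym[of "Suc i" "Suc j"] i j by simp
    finally show "mat_adjoint B3 $$ (i,j) = B3 $$ (i,j)" using i j by (simp add: B3_def)
  qed (use B3c in auto)
  obtain U3 l3 where U3: "unitary_n m U3" and B3: "B3 = U3 * dmat m l3 * mat_adjoint U3"
    using Suc.IH[OF B3c B3H] by blast
  have U3c: "U3 \<in> carrier_mat m m" and U3U: "mat_adjoint U3 * U3 = 1\<^sub>m m" using U3 unfolding unitary_n_def by auto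
  define U' where "U' = mat ?n ?n (\<lambda>(i,j). if i = 0 \<and> j = 0 then 1 else if i = 0 \<or> j = 0 then 0 else U3 $$ (i - 1, j - 1))"
  define l' where "l' i = (if i = 0 then Re e else l3 (i - 1))" for i
  have U'c: "U' \<in> carrier_mat ?n ?n" unfolding U'_def by auto
  have "mat_adjoint U' * U' = 1\<^sub>m ?n"
  proof (rule eq_matI)
    fix i j assume "i < dim_row (1\<^sub>m ?n :: complex mat)" "j < dim_col (1\<^sub>m ?n :: complex mat)"
    hence i: "i < ?n" and j: "j < ?n" by auto
    have "(mat_adjoint U' * U') $$ (i,j) = (\<Sum>k<?n. mat_adjoint U' $$ (i,k) * U' $$ (k,j))"
      by (rule mult_entry[of _ ?n ?n _ ?n]) (use U'c i j in auto)
    also have "\<dots> = (\<Sum>k<?n. cnj (U' $$ (k,i)) * U' $$ (k,j))"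
      using U'c i j by (intro sum.cong) auto
    also have "\<dots> = cnj (U' $$ (0,i)) * U' $$ (0,j) + (\<Sum>k<m. cnj (U' $$ (Suc k,i)) * U' $$ (Suc k,j))"
      by (rule sum.lessThan_Suc_shift)
    also have "\<dots> = 1\<^sub>m ?n $$ (i,j)"
    proof (cases "i = 0 \<or> j = 0")
      case True
      have "(\<Sum>k<m. cnj (U' $$ (Suc k,i)) * U' $$ (Suc k,j)) = 0"
        using True i j by (intro sum.neutral) (auto simp: U'_def)
      thus ?thesis using True i j by (auto simp: U'_def)
    next
      case False
      then obtain i' j' where ij: "i = Suc i'" "j = Suc j'" by (cases i; cases j) auto
      have "(\<Sum>k<m. cnj (U' $$ (Suc k,i)) * U' $$ (Suc k,j)) = (\<Sum>k<m. cnj (U3 $$ (k,i')) * U3 $$ (k,j'))"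
        using i j ij by (intro sum.cong) (auto simp: U'_def)
      also have "\<dots> = (\<Sum>k<m. mat_adjoint U3 $$ (i',k) * U3 $$ (k,j'))"
        using U3c i j ij by (intro sum.cong) auto
      also have "\<dots> = (mat_adjoint U3 * U3) $$ (i', j')"
        by (rule mult_entry[symmetric, of _ m m _ m]) (use U3c i j ij in auto)
      finally show ?thesis using U3U i j ij by (simp add: U'_def)
    qed
    finally show "(mat_adjoint U' * U') $$ (i,j) = 1\<^sub>m ?n $$ (i,j)" .
  qed (use U'c in auto)
  hence U': "unitary_n ?n U'" using U'c by (intro unitary_nI)
  have BU: "B = U' * dmat ?n l' * mat_adjoint U'"
  proof (rule eq_matI)
    fix i j assume "i < dim_row (U' * dmat ?n l' * mat_adjoint U')" "j < dim_col (U' * dmat ?n l' * mat_adjoint U')"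
    hence i: "i < ?n" and j: "j < ?n" using U'c by auto
    have "(U' * dmat ?n l' * mat_adjoint U') $$ (i,j) = (\<Sum>k<?n. U' $$ (i,k) * l' k * cnj (U' $$ (j,k)))"
      by (rule XDY_entry[OF U'c U'c i j])
    also have "\<dots> = U' $$ (i,0) * l' 0 * cnj (U' $$ (j,0)) + (\<Sum>k<m. U' $$ (i,Suc k) * l' (Suc k) * cnj (U' $$ (j,Suc k)))"
      by (rule sum.lessThan_Suc_shift)
    also have "\<dots> = B $$ (i,j)"
    proof (cases "i = 0 \<or> j = 0")
      case True
      have "(\<Sum>k<m. U' $$ (i,Suc k) * l' (Suc k) * cnj (U' $$ (j,Suc k))) = 0"
        using True i j by (intro sum.neutral) (auto simp: U'_def)
      thus ?thesis using True i j B0 B0' ereal by (auto simp: U'_def l'_def)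
    next
      case False
      then obtain i' j' where ij: "i = Suc i'" "j = Suc j'" by (cases i; cases j) auto
      have "(\<Sum>k<m. U' $$ (i,Suc k) * l' (Suc k) * cnj (U' $$ (j,Suc k))) = (\<Sum>k<m. U3 $$ (i',k) * l3 k * cnj (U3 $$ (j',k)))"
        using i j ij by (intro sum.cong) (auto simp: U'_def l'_def)
      also have "\<dots> = B3 $$ (i', j')"
        unfolding B3 using U3c i j ij by (intro XDY_entry[symmetric]) auto
      finally show ?thesis using i j ij by (simp add: U'_def B3_def)
    qed
    finally show "B $$ (i,j) = (U' * dmat ?n l' * mat_adjoint U') $$ (i,j)" by simp
  qed (use U'c Bc in auto)
  define U where "U = W * U'"
  have "unitary_n ?n U" unfolding U_def using W U' by (rule unitary_mult)
  moreover have "A = U * dmat ?n l' * mat_adjoint U"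
  proof -
    have L: "W * (mat_adjoint W * X) = X" if X: "X \<in> carrier_mat ?n ?n" for X
    proof -
      have "W * (mat_adjoint W * X) = (W * mat_adjoint W) * X"
        using assoc_mult_mat[of W ?n ?n "mat_adjoint W" ?n X ?n] Wc X by simp
      thus ?thesis using WW X by simp
    qed
    have AWB: "A = W * B * mat_adjoint W" unfolding B_def using Wc A
      by (simp add: assoc_mult_mat[of _ ?n ?n _ ?n _ ?n] WW L)
    show ?thesis unfolding AWB BU U_def using Wc U'c
      by (simp add: adj_mult[of _ ?n ?n _ ?n] assoc_mult_mat[of _ ?n ?n _ ?n _ ?n])
  qed
  ultimately show ?case by blast
qed


lemma dmat_mult: "dmat n l * dmat n m = dmat n (\<lambda>i. l i * m i)"
proof (rule eq_matI)
  fix i j assume "i < dim_row (dmat n (\<lambda>i. l i * m i))" "j < dim_col (dmat n (\<lambda>i. l i * m i))"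
  hence i: "i < n" and j: "j < n" by (auto simp: dmat_def)
  have "(dmat n l * dmat n m) $$ (i,j) = (\<Sum>k<n. dmat n l $$ (i,k) * dmat n m $$ (k,j))"
    by (rule mult_entry[of _ n n _ n]) (use i j in auto)
  also have "\<dots> = (\<Sum>k<n. if k = i then (if i = j then complex_of_real (l i * m i) else 0) else 0)"
    using i j by (intro sum.cong) (auto simp: dmat_def)
  also have "\<dots> = dmat n (\<lambda>i. l i * m i) $$ (i,j)" using i j by (simp add: dmat_def)
  finally show "(dmat n l * dmat n m) $$ (i,j) = dmat n (\<lambda>i. l i * m i) $$ (i,j)" .
qed (auto simp: dmat_def)

lemma adj_dmat[simp]: "mat_adjoint (dmat n l) = dmat n l"
  by (rule eq_matI) (auto simp: dmat_def)

lemma proots_lin_prod: "proots (\<Prod>a\<leftarrow>xs. [:- a, 1:]) = mset (xs :: complex list)"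
proof (induction xs)
  case (Cons a xs)
  have "(\<Prod>a\<leftarrow>xs. [:- a, 1:]) \<noteq> 0" by (auto simp: prod_list_zero_iff)
  have "proots (\<Prod>a\<leftarrow>a # xs. [:- a, 1:]) = proots ([:- a, 1:] * (\<Prod>a\<leftarrow>xs. [:- a, 1:]))"
    by (simp only: prod_list.Cons list.map)
  also have "\<dots> = proots [:- a, 1:] + proots (\<Prod>a\<leftarrow>xs. [:- a, 1:])"
    by (rule proots_mult) (use \<open>(\<Prod>a\<leftarrow>xs. [:- a, 1:]) \<noteq> 0\<close> in auto)
  also have "proots [:- a, 1:] = {#a#}" using proots_linear_factor[of "-a"] by simp
  finally show ?case using Cons by simp
qed simp

lemma char_poly_dmat: "char_poly (dmat n l) = (\<Prod>a\<leftarrow>map (\<lambda>i. complex_of_real (l i)) [0..<n]. [:- a, 1:])"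
proof -
  have ut: "upper_triangular (dmat n l)" by (auto simp: upper_triangular_def dmat_def)
  have "diag_mat (dmat n l) = map (\<lambda>i. complex_of_real (l i)) [0..<n]"
    by (auto simp: diag_mat_def dmat_def)
  thus ?thesis using char_poly_upper_triangular[OF dmat_carrier ut] by simp
qed

lemma trace_norm_spectral:
  assumes U: "unitary_n n U" and A: "A = U * dmat n l * mat_adjoint U"
  shows "trace_norm A = (\<Sum>i<n. \<bar>l i\<bar>)"
proof -
  have Uc: "U \<in> carrier_mat n n" and UU: "U * mat_adjoint U = 1\<^sub>m n" "mat_adjoint U * U = 1\<^sub>m n"
    using U unfolding unitary_n_def by auto
  have L: "mat_adjoint U * (U * X) = X" if X: "X \<in> carrier_mat n n" for X
  proof -
    have "mat_adjoint U * (U * X) = (mat_adjoint U * U) * X"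
      using assoc_mult_mat[of "mat_adjoint U" n n U n X n] Uc X by simp
    thus ?thesis using UU X by simp
  qed
  have adjA: "mat_adjoint A = U * dmat n l * mat_adjoint U"
    unfolding A using Uc
    by (simp add: adj_mult[of _ n n _ n] assoc_mult_mat[of _ n n _ n _ n])
  have "mat_adjoint A * A = U * (dmat n l * dmat n l) * mat_adjoint U"
    unfolding adjA unfolding A using Uc
    by (simp add: assoc_mult_mat[of _ n n _ n _ n] L)
  also have "\<dots> = U * dmat n (\<lambda>i. l i * l i) * mat_adjoint U" by (simp add: dmat_mult)
  finally have AA: "mat_adjoint A * A = U * dmat n (\<lambda>i. l i * l i) * mat_adjoint U" .
  have "similar_mat_wit (mat_adjoint A * A) (dmat n (\<lambda>i. l i * l i)) U (mat_adjoint U)"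
    unfolding similar_mat_wit_def Let_def AA using Uc UU by auto
  hence "similar_mat (mat_adjoint A * A) (dmat n (\<lambda>i. l i * l i))"
    unfolding similar_mat_def by blast
  hence cp: "char_poly (mat_adjoint A * A) = char_poly (dmat n (\<lambda>i. l i * l i))"
    by (rule char_poly_similar)
  have "singular_values A = image_mset (\<lambda>z. sqrt (Re z)) (mset (map (\<lambda>i. complex_of_real (l i * l i)) [0..<n]))"
    unfolding singular_values_def cp char_poly_dmat proots_lin_prod ..
  also have "\<dots> = mset (map (\<lambda>i. \<bar>l i\<bar>) [0..<n])"
    unfolding mset_map multiset.map_comp by (intro image_mset_cong) (simp del: of_real_mult add: of_real_mult[symmetric])
  finally show ?thesis unfolding trace_norm_def
    by (simp add: sum_unfold_sum_mset atLeast0LessThan)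
qed


lemma iso:
  assumes U: "unitary_n n U"
  shows "(\<Sum>i<n. (cmod (\<Sum>a<n. cnj (U $$ (a,i)) * complex_of_real (x a)))\<^sup>2) = (\<Sum>a<n. (x a)\<^sup>2)"
proof -
  have Uc: "U \<in> carrier_mat n n" and UU: "U * mat_adjoint U = 1\<^sub>m n" using U unfolding unitary_n_def by auto
  define z where "z i = (\<Sum>a<n. cnj (U $$ (a,i)) * complex_of_real (x a))" for i
  have cz: "cnj (z i) = (\<Sum>b<n. U $$ (b,i) * complex_of_real (x b))" for i
    unfolding z_def by simp
  have "complex_of_real (\<Sum>i<n. (cmod (z i))\<^sup>2) = (\<Sum>i<n. z i * cnj (z i))"
    by (simp add: complex_norm_square del: of_real_power)
  also have "\<dots> = (\<Sum>i<n. (\<Sum>a<n. cnj (U $$ (a,i)) * complex_of_real (x a)) * (\<Sum>b<n. U $$ (b,i) * complex_of_real (x b)))"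
    unfolding z_def by simp
  also have "\<dots> = (\<Sum>i<n. \<Sum>a<n. \<Sum>b<n. (complex_of_real (x a) * complex_of_real (x b)) * (U $$ (b,i) * cnj (U $$ (a,i))))"
    apply (subst sum_product)
    apply (rule sum.cong, rule refl)+
    apply (simp only: mult_ac)
    done
  also have "\<dots> = (\<Sum>a<n. \<Sum>b<n. \<Sum>i<n. (complex_of_real (x a) * complex_of_real (x b)) * (U $$ (b,i) * cnj (U $$ (a,i))))"
    by (subst sum.swap) (rule sum.cong[OF refl], rule sum.swap)
  also have "\<dots> = (\<Sum>a<n. \<Sum>b<n. (complex_of_real (x a) * complex_of_real (x b)) * (U * mat_adjoint U) $$ (b,a))"
    by (intro sum.cong refl) (simp add: sum_distrib_left[symmetric] XY_entry[OF Uc Uc])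
  also have "\<dots> = (\<Sum>a<n. \<Sum>b<n. if b = a then complex_of_real (x a * x a) else 0)"
    by (intro sum.cong refl) (auto simp: UU)
  also have "\<dots> = complex_of_real (\<Sum>a<n. (x a)\<^sup>2)"
    by (simp add: power2_eq_square)
  finally show ?thesis unfolding z_def of_real_eq_iff .
qed

lemma perS:
  assumes U: "unitary_n n U"
    and nF: "(\<Sum>a<n. (F a)\<^sup>2) \<le> 1" and nG: "(\<Sum>a<n. (G a)\<^sup>2) \<le> 1"
    and nD: "(\<Sum>a<n. (F a - G a)\<^sup>2) \<le> \<delta>\<^sup>2" and d: "\<delta> \<ge> 0"
  shows "(\<Sum>i<n. \<bar>(cmod (\<Sum>a<n. cnj (U $$ (a,i)) * complex_of_real (F a)))\<^sup>2
                 - (cmod (\<Sum>a<n. cnj (U $$ (a,i)) * complex_of_real (G a)))\<^sup>2\<bar>) \<le> 2 * \<delta>"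
proof -
  define p where "p i = (\<Sum>a<n. cnj (U $$ (a,i)) * complex_of_real (F a))" for i
  define q where "q i = (\<Sum>a<n. cnj (U $$ (a,i)) * complex_of_real (G a))" for i
  have pq: "p i - q i = (\<Sum>a<n. cnj (U $$ (a,i)) * complex_of_real (F a - G a))" for i
    unfolding p_def q_def by (simp add: sum_subtractf[symmetric] algebra_simps)
  have step: "\<bar>(cmod (p i))\<^sup>2 - (cmod (q i))\<^sup>2\<bar> \<le> \<bar>cmod (p i - q i)\<bar> * \<bar>cmod (p i) + cmod (q i)\<bar>" for i
  proof -
    have "\<bar>(cmod (p i))\<^sup>2 - (cmod (q i))\<^sup>2\<bar> = \<bar>cmod (p i) - cmod (q i)\<bar> * (cmod (p i) + cmod (q i))"
    proof -
      have "(cmod (p i))\<^sup>2 - (cmod (q i))\<^sup>2 = (cmod (p i) - cmod (q i)) * (cmod (p i) + cmod (q i))"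
        by (simp add: power2_eq_square algebra_simps)
      thus ?thesis by (simp add: abs_mult)
    qed
    also have "\<dots> \<le> cmod (p i - q i) * (cmod (p i) + cmod (q i))"
      by (intro mult_right_mono norm_triangle_ineq3) auto
    finally show ?thesis by simp
  qed
  have "(\<Sum>i<n. \<bar>(cmod (p i))\<^sup>2 - (cmod (q i))\<^sup>2\<bar>)
        \<le> (\<Sum>i<n. \<bar>cmod (p i - q i)\<bar> * \<bar>cmod (p i) + cmod (q i)\<bar>)"
    by (intro sum_mono step)
  also have "\<dots> \<le> L2_set (\<lambda>i. cmod (p i - q i)) {..<n} * L2_set (\<lambda>i. cmod (p i) + cmod (q i)) {..<n}"
    by (rule L2_set_mult_ineq)
  finally have main: "(\<Sum>i<n. \<bar>(cmod (p i))\<^sup>2 - (cmod (q i))\<^sup>2\<bar>) \<le> L2_set (\<lambda>i. cmod (p i - q i)) {..<n} * L2_set (\<lambda>i. cmod (p i) + cmod (q i)) {..<n}" .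
  have h1: "L2_set (\<lambda>i. cmod (p i - q i)) {..<n} \<le> \<delta>"
  proof -
    have "L2_set (\<lambda>i. cmod (p i - q i)) {..<n} = sqrt (\<Sum>a<n. (F a - G a)\<^sup>2)"
      unfolding L2_set_def pq using iso[OF U, of "\<lambda>a. F a - G a"] by simp
    also have "\<dots> \<le> sqrt (\<delta>\<^sup>2)" using nD by (rule real_sqrt_le_mono)
    finally show ?thesis using d by simp
  qed
  have h2: "L2_set (\<lambda>i. cmod (p i) + cmod (q i)) {..<n} \<le> 2"
  proof -
    have "(\<Sum>i<n. (cmod (p i) + cmod (q i))\<^sup>2) \<le> (\<Sum>i<n. 2 * (cmod (p i))\<^sup>2 + 2 * (cmod (q i))\<^sup>2)"
    proof (intro sum_mono)
      fix i
      have "0 \<le> (cmod (p i) - cmod (q i))\<^sup>2" by simp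
      thus "(cmod (p i) + cmod (q i))\<^sup>2 \<le> 2 * (cmod (p i))\<^sup>2 + 2 * (cmod (q i))\<^sup>2"
        by (simp add: power2_eq_square algebra_simps)
    qed
    also have "\<dots> = 2 * (\<Sum>a<n. (F a)\<^sup>2) + 2 * (\<Sum>a<n. (G a)\<^sup>2)"
      unfolding p_def q_def by (simp add: sum.distrib sum_distrib_left[symmetric] iso[OF U])
    also have "\<dots> \<le> 4" using nF nG by simp
    finally have "(\<Sum>i<n. (cmod (p i) + cmod (q i))\<^sup>2) \<le> 2\<^sup>2" by simp
    hence "sqrt (\<Sum>i<n. (cmod (p i) + cmod (q i))\<^sup>2) \<le> sqrt (2\<^sup>2)" by (rule real_sqrt_le_mono)
    thus ?thesis unfolding L2_set_def by simp
  qed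
  have "L2_set (\<lambda>i. cmod (p i - q i)) {..<n} * L2_set (\<lambda>i. cmod (p i) + cmod (q i)) {..<n} \<le> \<delta> * 2"
    using h1 h2 d by (intro mult_mono) (auto simp: L2_set_nonneg)
  with main have "(\<Sum>i<n. \<bar>(cmod (p i))\<^sup>2 - (cmod (q i))\<^sup>2\<bar>) \<le> 2 * \<delta>" by simp
  thus ?thesis unfolding p_def q_def .
qed


lemma dmat_dims[simp]: "dim_row (dmat n l) = n" "dim_col (dmat n l) = n"
  by (auto simp: dmat_def)

lemma entry_expand:
  fixes h :: "nat \<Rightarrow> nat \<Rightarrow> complex"
  shows "(\<Sum>b<n. (\<Sum>a<n. cu a * h a b) * v b) = (\<Sum>a<n. \<Sum>b<n. cu a * h a b * v b)"
  by (subst sum.swap) (simp add: sum_distrib_right)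

lemma main_bound:
  fixes F G :: "'s \<Rightarrow> nat \<Rightarrow> real"
  assumes A: "A \<in> carrier_mat n n"
   and Aent: "\<And>a b. a < n \<Longrightarrow> b < n \<Longrightarrow> A $$ (a,b) =
        complex_of_real ((\<Sum>S\<in>T. F S a * F S b - G S a * G S b) / real (card T))"
   and fin: "finite T" "T \<noteq> {}"
   and nF: "\<And>S. S \<in> T \<Longrightarrow> (\<Sum>a<n. (F S a)\<^sup>2) \<le> 1"
   and nG: "\<And>S. S \<in> T \<Longrightarrow> (\<Sum>a<n. (G S a)\<^sup>2) \<le> 1"
   and nD: "\<And>S. S \<in> T \<Longrightarrow> (\<Sum>a<n. (F S a - G S a)\<^sup>2) \<le> \<delta>\<^sup>2"
   and d: "\<delta> \<ge> 0"
  shows "trace_norm A \<le> 2 * \<delta>"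
proof -
  have AH: "mat_adjoint A = A"
  proof (rule eq_matI)
    fix i j assume "i < dim_row A" "j < dim_col A"
    hence i: "i < n" and j: "j < n" using A by auto
    show "mat_adjoint A $$ (i,j) = A $$ (i,j)"
      using i j A by (simp add: Aent mult.commute)
  qed (use A in auto)
  obtain U l where U: "unitary_n n U" and AU: "A = U * dmat n l * mat_adjoint U"
    using spectral[OF A AH] by blast
  have tn: "trace_norm A = (\<Sum>i<n. \<bar>l i\<bar>)" by (rule trace_norm_spectral[OF U AU])
  have Uc: "U \<in> carrier_mat n n" and UU: "U * mat_adjoint U = 1\<^sub>m n" "mat_adjoint U * U = 1\<^sub>m n"
    using U unfolding unitary_n_def by auto
  have L: "mat_adjoint U * (U * X) = X" if X: "X \<in> carrier_mat n n" for X
  proof -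
    have "mat_adjoint U * (U * X) = (mat_adjoint U * U) * X"
      using assoc_mult_mat[of "mat_adjoint U" n n U n X n] Uc X by simp
    thus ?thesis using UU X by simp
  qed
  have D: "mat_adjoint U * A * U = dmat n l"
    unfolding AU using Uc by (simp add: assoc_mult_mat[of _ n n _ n _ n] L UU)
  define M where "M = real (card T)"
  have M: "M > 0" unfolding M_def using fin by (simp add: card_gt_0_iff)
  define \<alpha> where "\<alpha> S i = (\<Sum>a<n. cnj (U $$ (a,i)) * complex_of_real (F S a))" for S i
  define \<beta> where "\<beta> S i = (\<Sum>a<n. cnj (U $$ (a,i)) * complex_of_real (G S a))" for S i
  have li: "l i = (\<Sum>S\<in>T. (cmod (\<alpha> S i))\<^sup>2 - (cmod (\<beta> S i))\<^sup>2) / M" if i: "i < n" for i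
  proof -
    have "complex_of_real (l i) = (mat_adjoint U * A * U) $$ (i,i)" using i by (simp add: D dmat_def)
    also have "\<dots> = (\<Sum>b<n. (mat_adjoint U * A) $$ (i,b) * U $$ (b,i))"
      by (rule mult_entry[of _ n n _ n]) (use i Uc A in auto)
    also have "\<dots> = (\<Sum>b<n. (\<Sum>a<n. cnj (U $$ (a,i)) * A $$ (a,b)) * U $$ (b,i))"
    proof (intro sum.cong refl)
      fix b assume b: "b \<in> {..<n}"
      have "(mat_adjoint U * A) $$ (i,b) = (\<Sum>a<n. mat_adjoint U $$ (i,a) * A $$ (a,b))"
        by (rule mult_entry[of _ n n _ n]) (use i b Uc A in auto)
      also have "\<dots> = (\<Sum>a<n. cnj (U $$ (a,i)) * A $$ (a,b))"
        using i Uc by (intro sum.cong refl) auto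
      finally show "(mat_adjoint U * A) $$ (i,b) * U $$ (b,i) = (\<Sum>a<n. cnj (U $$ (a,i)) * A $$ (a,b)) * U $$ (b,i)"
        by simp
    qed
    also have "\<dots> = (\<Sum>a<n. \<Sum>b<n. cnj (U $$ (a,i)) * A $$ (a,b) * U $$ (b,i))"
      by (rule entry_expand)
    also have "\<dots> = (\<Sum>a<n. \<Sum>b<n. \<Sum>S\<in>T. cnj (U $$ (a,i)) * complex_of_real (F S a * F S b - G S a * G S b) * U $$ (b,i) / complex_of_real M)"
      by (intro sum.cong refl)
         (simp add: Aent M_def of_real_sum sum_divide_distrib sum_distrib_left sum_distrib_right del: of_real_diff)
    also have "\<dots> = (\<Sum>S\<in>T. \<Sum>a<n. \<Sum>b<n. cnj (U $$ (a,i)) * complex_of_real (F S a * F S b - G S a * G S b) * U $$ (b,i)) / complex_of_real M"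
      by (simp add: sum_divide_distrib sum.swap[of _ T])
    also have "\<dots> = (\<Sum>S\<in>T. \<alpha> S i * cnj (\<alpha> S i) - \<beta> S i * cnj (\<beta> S i)) / complex_of_real M"
    proof -
      have "(\<Sum>a<n. \<Sum>b<n. cnj (U $$ (a,i)) * complex_of_real (F S a * F S b - G S a * G S b) * U $$ (b,i))
          = \<alpha> S i * cnj (\<alpha> S i) - \<beta> S i * cnj (\<beta> S i)" for S
      proof -
        have "\<alpha> S i * cnj (\<alpha> S i) - \<beta> S i * cnj (\<beta> S i) =
          (\<Sum>a<n. cnj (U $$ (a,i)) * complex_of_real (F S a)) * (\<Sum>b<n. U $$ (b,i) * complex_of_real (F S b))
          - (\<Sum>a<n. cnj (U $$ (a,i)) * complex_of_real (G S a)) * (\<Sum>b<n. U $$ (b,i) * complex_of_real (G S b))"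
          unfolding \<alpha>_def \<beta>_def by simp
        also have "\<dots> = (\<Sum>a<n. \<Sum>b<n. cnj (U $$ (a,i)) * complex_of_real (F S a) * (U $$ (b,i) * complex_of_real (F S b)))
              - (\<Sum>a<n. \<Sum>b<n. cnj (U $$ (a,i)) * complex_of_real (G S a) * (U $$ (b,i) * complex_of_real (G S b)))"
          by (simp only: sum_product)
        also have "\<dots> = (\<Sum>a<n. \<Sum>b<n. cnj (U $$ (a,i)) * complex_of_real (F S a) * (U $$ (b,i) * complex_of_real (F S b))
              - cnj (U $$ (a,i)) * complex_of_real (G S a) * (U $$ (b,i) * complex_of_real (G S b)))"
          by (simp only: sum_subtractf)
        also have "\<dots> = (\<Sum>a<n. \<Sum>b<n. cnj (U $$ (a,i)) * complex_of_real (F S a * F S b - G S a * G S b) * U $$ (b,i))"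
          by (intro sum.cong refl) (simp add: algebra_simps)
        finally show ?thesis by simp
      qed
      thus ?thesis by simp
    qed
    also have "\<dots> = complex_of_real ((\<Sum>S\<in>T. (cmod (\<alpha> S i))\<^sup>2 - (cmod (\<beta> S i))\<^sup>2) / M)"
      by (simp add: complex_norm_square[symmetric] of_real_sum del: of_real_power)
    finally show ?thesis by (simp only: of_real_eq_iff)
  qed
  have "(\<Sum>i<n. \<bar>l i\<bar>) \<le> (\<Sum>i<n. (\<Sum>S\<in>T. \<bar>(cmod (\<alpha> S i))\<^sup>2 - (cmod (\<beta> S i))\<^sup>2\<bar>) / M)"
  proof (intro sum_mono)
    fix i assume "i \<in> {..<n}"
    hence "\<bar>l i\<bar> = \<bar>\<Sum>S\<in>T. (cmod (\<alpha> S i))\<^sup>2 - (cmod (\<beta> S i))\<^sup>2\<bar> / M" using li M by simp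
    also have "\<dots> \<le> (\<Sum>S\<in>T. \<bar>(cmod (\<alpha> S i))\<^sup>2 - (cmod (\<beta> S i))\<^sup>2\<bar>) / M"
      using M by (intro divide_right_mono sum_abs) auto
    finally show "\<bar>l i\<bar> \<le> (\<Sum>S\<in>T. \<bar>(cmod (\<alpha> S i))\<^sup>2 - (cmod (\<beta> S i))\<^sup>2\<bar>) / M" .
  qed
  also have "\<dots> = (\<Sum>S\<in>T. \<Sum>i<n. \<bar>(cmod (\<alpha> S i))\<^sup>2 - (cmod (\<beta> S i))\<^sup>2\<bar>) / M"
    by (simp add: sum_divide_distrib[symmetric] sum.swap[of _ T])
  also have "\<dots> \<le> (\<Sum>S\<in>T. 2 * \<delta>) / M"
    using M by (intro divide_right_mono sum_mono) (auto simp: \<alpha>_def \<beta>_def intro!: perS[OF U nF nG nD d])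
  also have "\<dots> = 2 * \<delta>" using M unfolding M_def by simp
  finally show ?thesis unfolding tn .
qed


lemma tup_length[simp]: "length (tup d k a) = k"
  by (simp add: tup_def)

lemma tup_nth: "t < k \<Longrightarrow> tup d k a ! t = a div d ^ t mod d"
  by (simp add: tup_def)

lemma tup_Suc: "tup d (Suc k) a = (a mod d) # tup d k (a div d)"
proof -
  have "tup d (Suc k) a = map (\<lambda>t. a div d ^ t mod d) (0 # [Suc 0..<Suc k])"
    unfolding tup_def upt_conv_Cons[OF zero_less_Suc] ..
  also have "\<dots> = (a mod d) # map (\<lambda>t. a div d ^ Suc t mod d) [0..<k]"
    by (simp del: upt_Suc add: map_Suc_upt[symmetric] comp_def)
  also have "map (\<lambda>t. a div d ^ Suc t mod d) [0..<k] = tup d k (a div d)"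
    unfolding tup_def by (simp add: div_mult2_eq)
  finally show ?thesis .
qed

lemma tup_inj: assumes "d > 0" shows "inj_on (tup d k) {..<d ^ k}"
proof (induction k)
  case 0
  show ?case by (auto intro: inj_onI)
next
  case (Suc k)
  show ?case
  proof (rule inj_onI)
    fix a b assume a: "a \<in> {..<d ^ Suc k}" and b: "b \<in> {..<d ^ Suc k}" and e: "tup d (Suc k) a = tup d (Suc k) b"
    hence m: "a mod d = b mod d" and t: "tup d k (a div d) = tup d k (b div d)" by (auto simp: tup_Suc)
    have "a div d < d ^ k" "b div d < d ^ k" using a b assms
      by (auto simp: div_less_iff_less_mult mult.commute)
    hence "a div d = b div d" using Suc.IH t by (auto dest: inj_onD)
    thus "a = b" using m by (metis div_mod_decomp)
  qed
qed

lemma sum_tup_le: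
  fixes g :: "nat list \<Rightarrow> real"
  assumes d: "d > 0" and X: "finite X" and z: "\<And>xs. xs \<notin> X \<Longrightarrow> g xs = 0" and nn: "\<And>xs. g xs \<ge> 0"
  shows "(\<Sum>a<d ^ k. g (tup d k a)) \<le> (\<Sum>xs\<in>X. g xs)"
proof -
  let ?I = "tup d k ` {..<d ^ k}"
  have "(\<Sum>a<d ^ k. g (tup d k a)) = (\<Sum>xs\<in>?I. g xs)"
    by (rule sum.reindex[OF tup_inj[OF d], symmetric, unfolded comp_def])
  also have "\<dots> = (\<Sum>xs\<in>?I \<inter> X. g xs)"
    by (rule sum.mono_neutral_right) (auto simp: z)
  also have "\<dots> \<le> (\<Sum>xs\<in>X. g xs)"
    by (rule sum_mono2) (auto simp: X nn)
  finally show ?thesis .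
qed

lemma prod_ind:
  fixes c :: complex
  assumes "length x = k"
  shows "(\<Prod>t<k. (if x ! t \<in> S then c else 0)) = (if set x \<subseteq> S then c ^ k else 0)"
proof (cases "set x \<subseteq> S")
  case True
  hence "\<And>t. t < k \<Longrightarrow> x ! t \<in> S" using assms by (auto simp: set_conv_nth)
  hence "(\<Prod>t<k. (if x ! t \<in> S then c else 0)) = (\<Prod>t<k. c)" by (intro prod.cong) auto
  thus ?thesis using True by simp
next
  case False
  then obtain t where "t < k" "x ! t \<notin> S" using assms by (auto simp: set_conv_nth)
  hence "(\<Prod>t<k. (if x ! t \<in> S then c else 0)) = 0" by (intro prod_zero) auto
  thus ?thesis using False by simp
qed

lemma poch_eq: "k \<le> s \<Longrightarrow> pochhammer (s + 1 - k) k = \<Prod>{s - k + 1..s}"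
proof (induction k)
  case (Suc k)
  have "pochhammer (s + 1 - Suc k) (Suc k) = (s - k) * pochhammer (s - k + 1) k"
    using Suc.prems by (simp add: pochhammer_rec)
  also have "s - k + 1 = s + 1 - k" using Suc.prems by simp
  also have "pochhammer (s + 1 - k) k = \<Prod>{s - k + 1..s}" using Suc by simp
  also have "(s - k) * \<Prod>{s - k + 1..s} = \<Prod>{s - Suc k + 1..s}"
    using Suc.prems by (simp add: prod.atLeast_Suc_atMost Suc_diff_Suc)
  finally show ?case .
qed simp

lemma poch_lower:
  assumes "k \<le> s"
  shows "real (\<Prod>{s - k + 1..s}) / real s ^ k \<ge> 1 - real k ^ 2 / real s
       \<and> real (\<Prod>{s - k + 1..s}) / real s ^ k \<le> 1 \<and> real (\<Prod>{s - k + 1..s}) / real s ^ k \<ge> 0"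
  using assms
proof (induction k)
  case 0
  show ?case by simp
next
  case (Suc k)
  define q where "q = real (\<Prod>{s - k + 1..s}) / real s ^ k"
  have IH: "q \<ge> 1 - real k ^ 2 / real s" "q \<le> 1" "q \<ge> 0" using Suc unfolding q_def by auto
  have s: "real s > 0" using Suc.prems by simp
  have "\<Prod>{s - Suc k + 1..s} = (s - k) * \<Prod>{s - k + 1..s}"
    using Suc.prems by (simp add: prod.atLeast_Suc_atMost Suc_diff_Suc)
  hence "real (\<Prod>{s - Suc k + 1..s}) / real s ^ Suc k = q * (1 - real k / real s)"
    unfolding q_def using s Suc.prems by (simp add: of_nat_diff field_simps)
  moreover have "q * (1 - real k / real s) \<ge> 1 - real (Suc k) ^ 2 / real s"
  proof -
    have "q * (real k / real s) \<le> real k / real s" by (rule mult_left_le_one_le) (use IH s in auto)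
    hence "q * (1 - real k / real s) \<ge> q - real k / real s" by (simp add: algebra_simps)
    moreover have "q - real k / real s \<ge> 1 - real (Suc k) ^ 2 / real s"
    proof -
      have "real k ^ 2 + real k \<le> real (Suc k) ^ 2" by (simp add: power2_eq_square algebra_simps)
      hence "(real k ^ 2 + real k) / real s \<le> real (Suc k) ^ 2 / real s" using s by (intro divide_right_mono) auto
      moreover have "(real k ^ 2 + real k) / real s = real k ^ 2 / real s + real k / real s" by (rule add_divide_distrib)
      ultimately show ?thesis using IH(1) by linarith
    qed
    ultimately show ?thesis by linarith
  qed
  moreover have "0 \<le> 1 - real k / real s" "1 - real k / real s \<le> 1" using Suc.prems s by auto
  hence "q * (1 - real k / real s) \<le> 1" "q * (1 - real k / real s) \<ge> 0" using IH
    by (auto simp: mult_le_one)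
  ultimately show ?case by simp
qed


lemma alg2: assumes a: "(a::real) > 0" and b: "b > 0"
  shows "a\<^sup>2 * (1 / b - 1 / a)\<^sup>2 + (b\<^sup>2 - a\<^sup>2) * (1 / b)\<^sup>2 = 2 - 2 * (a / b)"
  using a b by (simp add: field_simps power2_eq_square)

lemma sqrt_ge_self: "0 \<le> x \<Longrightarrow> x \<le> 1 \<Longrightarrow> x \<le> sqrt (x::real)"
  by (metis abs_of_nonneg mult_right_le_one_le real_sqrt_ge_zero real_sqrt_le_1_iff real_sqrt_mult_self)

theorem proposition2:
  "\<exists>C::real. \<forall>d s k :: nat. 1 \<le> k \<and> k \<le> s \<and> s \<le> d \<longrightarrow>
     trace_norm (Phi d s k - Phi_tilde d s k) \<le> C * real k / sqrt (real s)"
proof (intro exI[of _ 3] allI impI)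
  fix d s k :: nat assume "1 \<le> k \<and> k \<le> s \<and> s \<le> d"
  hence k: "1 \<le> k" "k \<le> s" "s \<le> d" by auto
  hence d0: "d > 0" and s0: "s > 0" by auto
  define n where "n = d ^ k"
  define T where "T = subsets_of_size d s"
  define N where "N = real s ^ k"
  define P where "P = real (pochhammer (s + 1 - k) k)"
  define L where "L S = {xs. set xs \<subseteq> S \<and> length xs = k}" for S :: "nat set"
  define fL where "fL S xs = (if xs \<in> L S then 1 / sqrt N else 0)" for S xs
  define gL where "gL S xs = (if xs \<in> distinct_tuples S k then 1 / sqrt P else 0)" for S xs
  define F where "F S a = fL S (tup d k a)" for S a
  define G where "G S a = gL S (tup d k a)" for S a
  have finT: "finite T" unfolding T_def subsets_of_size_def
    by (rule finite_subset[of _ "Pow {0..<d}"]) auto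
  have "{0..<s} \<in> T" using k unfolding T_def subsets_of_size_def by auto
  hence Tne: "T \<noteq> {}" by auto
  have TS: "finite S" "card S = s" "S \<subseteq> {0..<d}" if "S \<in> T" for S
    using that unfolding T_def subsets_of_size_def by (auto intro: finite_subset)
  have N0: "N > 0" unfolding N_def using s0 by simp
  have Peq: "P = real (\<Prod>{s - k + 1..s})" unfolding P_def using poch_eq[OF k(2)] by simp
  have P0: "P > 0" unfolding Peq by (auto intro!: prod_pos)
  have PN: "P / N \<ge> 1 - real k ^ 2 / real s" "P / N \<le> 1" "P / N \<ge> 0"
    using poch_lower[OF k(2)] unfolding Peq N_def by auto
  have cardL: "real (card (L S)) = N" if "S \<in> T" for S
    unfolding L_def N_def using card_lists_length_eq[OF TS(1)[OF that], of k] TS(2)[OF that] by simp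
  have finL: "finite (L S)" if "S \<in> T" for S
    unfolding L_def using finite_lists_length_eq[OF TS(1)[OF that]] by simp
  have DL: "distinct_tuples S k \<subseteq> L S" for S unfolding L_def distinct_tuples_def by auto
  have cardD: "real (card (distinct_tuples S k)) = P" if "S \<in> T" for S
  proof -
    have "distinct_tuples S k = {xs. length xs = k \<and> distinct xs \<and> set xs \<subseteq> S}"
      unfolding distinct_tuples_def by auto
    hence "card (distinct_tuples S k) = \<Prod>{card S - k + 1..card S}"
      using card_lists_distinct_length_eq[OF TS(1)[OF that], of k] TS(2)[OF that] k by simp
    thus ?thesis unfolding Peq using TS(2)[OF that] by simp
  qed
  have cardLD: "real (card (L S - distinct_tuples S k)) = N - P" if "S \<in> T" for S
  proof -
    have "card (distinct_tuples S k) \<le> card (L S)" by (rule card_mono[OF finL[OF that] DL])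
    thus ?thesis using cardL[OF that] cardD[OF that] by (simp add: card_Diff_subset[OF finite_subset[OF DL finL[OF that]] DL] of_nat_diff)
  qed
  have nF: "(\<Sum>a<n. (F S a)\<^sup>2) \<le> 1" if S: "S \<in> T" for S
  proof -
    have "(\<Sum>a<n. (F S a)\<^sup>2) \<le> (\<Sum>xs\<in>L S. (fL S xs)\<^sup>2)"
      unfolding n_def F_def by (rule sum_tup_le[OF d0 finL[OF S]]) (auto simp: fL_def)
    also have "\<dots> = (\<Sum>xs\<in>L S. 1 / N)" using N0 by (intro sum.cong) (auto simp: fL_def power_divide)
    also have "\<dots> = 1" using cardL[OF S] N0 by simp
    finally show ?thesis .
  qed
  have nG: "(\<Sum>a<n. (G S a)\<^sup>2) \<le> 1" if S: "S \<in> T" for S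
  proof -
    have "(\<Sum>a<n. (G S a)\<^sup>2) \<le> (\<Sum>xs\<in>distinct_tuples S k. (gL S xs)\<^sup>2)"
      unfolding n_def G_def
      by (rule sum_tup_le[OF d0 finite_subset[OF DL finL[OF S]]]) (auto simp: gL_def)
    also have "\<dots> = (\<Sum>xs\<in>distinct_tuples S k. 1 / P)" using P0 by (intro sum.cong) (auto simp: gL_def power_divide)
    also have "\<dots> = 1" using cardD[OF S] P0 by simp
    finally show ?thesis .
  qed
  define \<delta> where "\<delta> = sqrt 2 * real k / sqrt (real s)"
  have d: "\<delta> \<ge> 0" unfolding \<delta>_def by simp
  have d2: "\<delta>\<^sup>2 = 2 * real k ^ 2 / real s" unfolding \<delta>_def using s0 by (simp add: power_mult_distrib power_divide)
  have nD: "(\<Sum>a<n. (F S a - G S a)\<^sup>2) \<le> \<delta>\<^sup>2" if S: "S \<in> T" for S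
  proof -
    have "(\<Sum>a<n. (F S a - G S a)\<^sup>2) \<le> (\<Sum>xs\<in>L S. (fL S xs - gL S xs)\<^sup>2)"
      unfolding n_def F_def G_def by (rule sum_tup_le[OF d0 finL[OF S]]) (auto simp: fL_def gL_def dest: subsetD[OF DL])
    also have "\<dots> = (\<Sum>xs\<in>L S - distinct_tuples S k. (fL S xs - gL S xs)\<^sup>2) + (\<Sum>xs\<in>distinct_tuples S k. (fL S xs - gL S xs)\<^sup>2)"
      by (rule sum.subset_diff[OF DL finL[OF S]])
    also have "(\<Sum>xs\<in>L S - distinct_tuples S k. (fL S xs - gL S xs)\<^sup>2) = (\<Sum>xs\<in>L S - distinct_tuples S k. (1 / sqrt N)\<^sup>2)"
      by (intro sum.cong) (auto simp: fL_def gL_def)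
    also have "(\<Sum>xs\<in>distinct_tuples S k. (fL S xs - gL S xs)\<^sup>2) = (\<Sum>xs\<in>distinct_tuples S k. (1 / sqrt N - 1 / sqrt P)\<^sup>2)"
      by (intro sum.cong) (auto simp: fL_def gL_def dest: subsetD[OF DL])
    also have "(\<Sum>xs\<in>L S - distinct_tuples S k. (1 / sqrt N)\<^sup>2) + (\<Sum>xs\<in>distinct_tuples S k. (1 / sqrt N - 1 / sqrt P)\<^sup>2)
       = (sqrt P)\<^sup>2 * (1 / sqrt N - 1 / sqrt P)\<^sup>2 + ((sqrt N)\<^sup>2 - (sqrt P)\<^sup>2) * (1 / sqrt N)\<^sup>2"
      using cardLD[OF S] cardD[OF S] N0 P0 by simp
    also have "\<dots> = 2 - 2 * (sqrt P / sqrt N)" by (rule alg2) (use N0 P0 in auto)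
    also have "sqrt P / sqrt N = sqrt (P / N)" by (simp add: real_sqrt_divide)
    also have "2 - 2 * sqrt (P / N) \<le> 2 - 2 * (P / N)" using sqrt_ge_self[OF PN(3) PN(2)] by simp
    also have "\<dots> \<le> \<delta>\<^sup>2" unfolding d2 using PN(1) by simp
    finally show ?thesis by simp
  qed
  have cA: "Phi d s k - Phi_tilde d s k \<in> carrier_mat n n"
    unfolding n_def Phi_def Phi_tilde_def expect_S_def by auto
  have tens: "tensor_pow d k (phi d S) $$ (a,b) = complex_of_real (F S a * F S b)"
    if S: "S \<in> T" and a: "a < n" and b: "b < n" for S a b
  proof -
    define c where "c = 1 / complex_of_real (sqrt (real s))"
    have cc: "cnj c = c" unfolding c_def by simp
    have lt: "tup d k x ! t < d" if "t < k" for x t using that d0 by (simp add: tup_nth)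
    have "tensor_pow d k (phi d S) $$ (a,b) = (\<Prod>t<k. phi d S $$ (tup d k a ! t, tup d k b ! t))"
      using a b unfolding tensor_pow_def n_def by simp
    also have "\<dots> = (\<Prod>t<k. (if tup d k a ! t \<in> S then c else 0) * (if tup d k b ! t \<in> S then c else 0))"
      by (intro prod.cong refl) (simp add: phi_def lt TS(2)[OF S] c_def)
    also have "\<dots> = (\<Prod>t<k. (if tup d k a ! t \<in> S then c else 0)) * (\<Prod>t<k. (if tup d k b ! t \<in> S then c else 0))"
      by (rule prod.distrib)
    also have "\<dots> = (if set (tup d k a) \<subseteq> S then c ^ k else 0) * (if set (tup d k b) \<subseteq> S then c ^ k else 0)"
      by (simp add: prod_ind)
    also have "c ^ k = complex_of_real (1 / sqrt N)"
      unfolding c_def N_def by (simp add: real_sqrt_power power_one_over)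
    finally show ?thesis unfolding F_def fL_def L_def by simp
  qed
  have tild: "tilde_term d k S $$ (a,b) = complex_of_real (G S a * G S b)"
    if S: "S \<in> T" and a: "a < n" and b: "b < n" for S a b
  proof -
    have "tilde_term d k S $$ (a,b) = (if tup d k a \<in> distinct_tuples S k \<and> tup d k b \<in> distinct_tuples S k
      then 1 / complex_of_real P else 0)"
      using a b unfolding tilde_term_def n_def P_def by (simp add: TS(2)[OF S])
    also have "1 / complex_of_real P = complex_of_real (1 / sqrt P) * complex_of_real (1 / sqrt P)"
    proof -
      have "1 / sqrt P * (1 / sqrt P) = 1 / P" using P0 by (simp add: real_sqrt_mult_self)
      thus ?thesis by (metis of_real_mult of_real_divide of_real_1)
    qed
    finally show ?thesis unfolding G_def gL_def by simp
  qed
  have Aent: "(Phi d s k - Phi_tilde d s k) $$ (a,b) =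
        complex_of_real ((\<Sum>S\<in>T. F S a * F S b - G S a * G S b) / real (card T))"
    if a: "a < n" and b: "b < n" for a b
  proof -
    have "(Phi d s k - Phi_tilde d s k) $$ (a,b) =
      (\<Sum>S\<in>T. tensor_pow d k (phi d S) $$ (a,b)) / of_nat (card T) - (\<Sum>S\<in>T. tilde_term d k S $$ (a,b)) / of_nat (card T)"
      using a b unfolding Phi_def Phi_tilde_def expect_S_def T_def n_def by simp
    also have "\<dots> = (\<Sum>S\<in>T. complex_of_real (F S a * F S b)) / of_nat (card T) - (\<Sum>S\<in>T. complex_of_real (G S a * G S b)) / of_nat (card T)"
      using a b by (simp add: tens tild cong: sum.cong)
    also have "\<dots> = complex_of_real ((\<Sum>S\<in>T. F S a * F S b - G S a * G S b) / real (card T))"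
      by (simp add: sum_subtractf diff_divide_distrib del: of_real_mult)
    finally show ?thesis .
  qed
  have "trace_norm (Phi d s k - Phi_tilde d s k) \<le> 2 * \<delta>"
    by (rule main_bound[OF cA Aent finT Tne nF nG nD d])
  also have "2 * \<delta> \<le> 3 * real k / sqrt (real s)"
  proof -
    have "2 * sqrt 2 \<le> (3::real)"
    proof -
      have "(2 * sqrt 2)\<^sup>2 = (8::real)" by (simp add: power_mult_distrib)
      hence "(2 * sqrt 2)\<^sup>2 \<le> (3::real)\<^sup>2" by simp
      thus ?thesis by (rule power2_le_imp_le) simp
    qed
    hence "2 * sqrt 2 * (real k / sqrt (real s)) \<le> 3 * (real k / sqrt (real s))"
      by (intro mult_right_mono) auto
    thus ?thesis unfolding \<delta>_def by (simp add: mult.assoc)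
  qed
  finally show "trace_norm (Phi d s k - Phi_tilde d s k) \<le> 3 * real k / sqrt (real s)" .
qed


end
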